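(* Let $G$ be a graph, $k,\ell\ge1$, $S$ an independent set of size $k$, and $J_0=S,J_1,\dots,J_\ell$ independent sets of $G$. Define $\mathcal{C}_0=\{\{(S,k)\}\}$ and, for $i\in\{1,\dots,\ell\}$, let $\mathcal{C}_i$ contain, for every $C\in\mathcal{C}_{i-1}$ and every constraint $(X,b)\in C$, the constraint set $C'$ consisting of: $(N(X)\cap J_i,1)$; $(X\cap J_i,b-1)$ if $b\ge2$ (nothing if $b=1$); and $(X'\cap J_i,b')$ for every other constraint $(X',b')\in C$. Let $i\in\{0,\dots,\ell\}$ and let $Z\subseteq J_i$ be an independent set of size $k$. If there is a sequence $S=I'_0,I'_1,\dots,I'_i=Z$ of independent sets of size $k$ such that $I'_p\subseteq J_p$ for every $p\in\{0,\dots,i\}$ and each $I'_{p+1}=(I'_p\setminus\{u\})\cup\{v\}$ for some $u\in I'_p$, $v\notin I'_p$ with $\{u,v\}\in E(G)$, then $Z$ satisfies at least one constraint set in $\mathcal{C}_i$.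
   Context: A constraint is a pair $(X,b)$ with $X\subseteq V(G)$ and $b$ a positive integer. A set $Z\subseteq V(G)$ satisfies $(X,b)$ if $|Z\cap X|=b$, and satisfies a constraint set $C$ if it satisfies every constraint in $C$. For $X\subseteq V(G)$, $N(X)=\{v\notin X: v\text{ adjacent to some }u\in X\}$. *)

theory Defs
  imports Main
begin

definition simple_graph :: "'a set \<Rightarrow> ('a \<Rightarrow> 'a \<Rightarrow> bool) \<Rightarrow> bool" where
  "simple_graph V E \<longleftrightarrow> finite V \<and> (\<forall>u v. E u v \<longrightarrow> u \<in> V \<and> v \<in> V)
     \<and> (\<forall>u v. E u v \<longrightarrow> E v u) \<and> (\<forall>u. \<not> E u u)"

definition indep_set :: "'a set \<Rightarrow> ('a \<Rightarrow> 'a \<Rightarrow> bool) \<Rightarrow> 'a set \<Rightarrow> bool" where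
  "indep_set V E I \<longleftrightarrow> I \<subseteq> V \<and> (\<forall>u\<in>I. \<forall>v\<in>I. \<not> E u v)"

definition nbhd :: "'a set \<Rightarrow> ('a \<Rightarrow> 'a \<Rightarrow> bool) \<Rightarrow> 'a set \<Rightarrow> 'a set" where
  "nbhd V E X = {v \<in> V. v \<notin> X \<and> (\<exists>u\<in>X. E u v)}"

definition satisfies_constraint :: "'a set \<Rightarrow> 'a set \<times> nat \<Rightarrow> bool" where
  "satisfies_constraint Z c \<longleftrightarrow> card (Z \<inter> fst c) = snd c"

definition satisfies_cset :: "'a set \<Rightarrow> ('a set \<times> nat) set \<Rightarrow> bool" where
  "satisfies_cset Z C \<longleftrightarrow> (\<forall>c\<in>C. satisfies_constraint Z c)"

definition cstep :: "'a set \<Rightarrow> ('a \<Rightarrow> 'a \<Rightarrow> bool) \<Rightarrow> 'a set \<Rightarrow> ('a set \<times> nat) set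
    \<Rightarrow> ('a set \<times> nat) set set" where
  "cstep V E Ji C = (\<lambda>(X, b). {(nbhd V E X \<inter> Ji, 1)}
        \<union> (if b \<ge> 2 then {(X \<inter> Ji, b - 1)} else {})
        \<union> {(X' \<inter> Ji, b') | X' b'. (X', b') \<in> C \<and> (X', b') \<noteq> (X, b)}) ` C"

fun cfam :: "'a set \<Rightarrow> ('a \<Rightarrow> 'a \<Rightarrow> bool) \<Rightarrow> 'a set \<Rightarrow> nat \<Rightarrow> (nat \<Rightarrow> 'a set) \<Rightarrow> nat
    \<Rightarrow> ('a set \<times> nat) set set" where
  "cfam V E S k J 0 = {{(S, k)}}"
| "cfam V E S k J (Suc i) = (\<Union>C\<in>cfam V E S k J i. cstep V E (J (Suc i)) C)"

end

theory Submission
  imports Defs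
begin

lemma step:
  assumes Jp: "indep_set V E Jp" and Jq: "indep_set V E Jq"
  and A: "A \<subseteq> Jp" "finite A" and B: "B \<subseteq> Jq"
  and uA: "u\<in>A" "v\<notin>A" "E u v" "B = A - {u} \<union> {v}" "v\<in>V"
  and sat: "satisfies_cset A C" and sub: "\<forall>c\<in>C. fst c \<subseteq> Jp"
  and cov: "\<forall>w\<in>A. \<exists>c\<in>C. w \<in> fst c"
  and uniq: "\<forall>w\<in>A. \<forall>c1\<in>C. \<forall>c2\<in>C. w\<in>fst c1 \<longrightarrow> w\<in>fst c2 \<longrightarrow> c1=c2"
  shows "\<exists>C'\<in>cstep V E Jq C. satisfies_cset B C' \<and> (\<forall>c\<in>C'. fst c \<subseteq> Jq)
     \<and> (\<forall>w\<in>B. \<exists>c\<in>C'. w\<in>fst c) \<and> (\<forall>w\<in>B. \<forall>c1\<in>C'. \<forall>c2\<in>C'. w\<in>fst c1 \<longrightarrow> w\<in>fst c2 \<longrightarrow> c1=c2)"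
proof -
  obtain X b where Xb: "(X,b) \<in> C" "u \<in> X" using cov uA(1) by fastforce
  have XJ: "X \<subseteq> Jp" using sub Xb by fastforce
  have vJp: "v \<notin> Jp" using Jp A uA(1,3) unfolding indep_set_def by blast
  have vC: "\<forall>c\<in>C. v \<notin> fst c" using sub vJp by blast
  have noN: "\<forall>w\<in>A. w \<notin> nbhd V E X" using Jp A XJ unfolding indep_set_def nbhd_def by blast
  have cardX: "card (A \<inter> X) = b" using sat Xb unfolding satisfies_cset_def satisfies_constraint_def by auto
  have uo: "\<forall>c\<in>C. c \<noteq> (X,b) \<longrightarrow> u \<notin> fst c" using uniq uA(1) Xb by fastforce
  define C' where "C' = {(nbhd V E X \<inter> Jq, 1)}
        \<union> (if b \<ge> 2 then {(X \<inter> Jq, b - 1)} else {})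
        \<union> {(X' \<inter> Jq, b') | X' b'. (X', b') \<in> C \<and> (X', b') \<noteq> (X, b)}"
  have mem: "C' \<in> cstep V E Jq C" unfolding cstep_def C'_def
    by (rule image_eqI[where x="(X,b)"]) (use Xb in auto)
  have Ccases: "P c" if "c \<in> C'" "c = (nbhd V E X \<inter> Jq, 1) \<Longrightarrow> P c"
     "b \<ge> 2 \<Longrightarrow> c = (X \<inter> Jq, b - 1) \<Longrightarrow> P c"
     "\<And>X' b'. c = (X' \<inter> Jq, b') \<Longrightarrow> (X', b') \<in> C \<Longrightarrow> (X', b') \<noteq> (X, b) \<Longrightarrow> P c" for c P
  proof -
    have "c = (nbhd V E X \<inter> Jq, 1) \<or> (b \<ge> 2 \<and> c = (X \<inter> Jq, b - 1)) \<or>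
       (\<exists>X' b'. c = (X' \<inter> Jq, b') \<and> (X', b') \<in> C \<and> (X', b') \<noteq> (X, b))"
      using that(1) unfolding C'_def by (auto split: if_splits)
    thus ?thesis using that(2-4) by blast
  qed
  have vB: "v \<in> B" "v \<in> Jq" using uA B by auto
  have vN: "v \<in> nbhd V E X" using uA Xb vJp XJ unfolding nbhd_def by blast
  have s1: "B \<inter> (nbhd V E X \<inter> Jq) = {v}" using vB vN noN uA(4) by blast
  have s2: "B \<inter> (X \<inter> Jq) = (A \<inter> X) - {u}" using B uA vJp XJ by blast
  have s3: "B \<inter> (X' \<inter> Jq) = A \<inter> X'" if "(X',b') \<in> C" "(X',b') \<noteq> (X,b)" for X' b'
    using that uo vC B A uA by fastforce
  have satB: "satisfies_cset B C'"
    unfolding satisfies_cset_def satisfies_constraint_def C'_def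
  proof (intro ballI)
    fix c assume c: "c \<in> {(nbhd V E X \<inter> Jq, 1)}
        \<union> (if b \<ge> 2 then {(X \<inter> Jq, b - 1)} else {})
        \<union> {(X' \<inter> Jq, b') | X' b'. (X', b') \<in> C \<and> (X', b') \<noteq> (X, b)}"
    show "card (B \<inter> fst c) = snd c"
    proof -
      have fAX: "finite (A \<inter> X)" using A by simp
      show ?thesis
      proof (rule Ccases[where P="\<lambda>c. card (B \<inter> fst c) = snd c", OF c[folded C'_def]])
        assume "c = (nbhd V E X \<inter> Jq, 1)" thus ?thesis using s1 by simp
      next
        assume "b \<ge> 2" "c = (X \<inter> Jq, b - 1)" thus ?thesis using s2 cardX fAX uA(1) Xb(2) by simp
      next
        fix X' b' assume h: "c = (X' \<inter> Jq, b')" "(X', b') \<in> C" "(X', b') \<noteq> (X, b)"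
        thus ?thesis using s3[OF h(2,3)] sat unfolding satisfies_cset_def satisfies_constraint_def by fastforce
      qed
    qed
  qed
  have subB: "\<forall>c\<in>C'. fst c \<subseteq> Jq" unfolding C'_def by auto
  have covB: "\<forall>w\<in>B. \<exists>c\<in>C'. w\<in>fst c"
  proof
    fix w assume w: "w \<in> B"
    show "\<exists>c\<in>C'. w\<in>fst c"
    proof (cases "w = v")
      case True thus ?thesis using vB vN unfolding C'_def by auto
    next
      case False
      hence wA: "w \<in> A" "w \<noteq> u" "w \<in> Jq" using w uA B by auto
      obtain c where c: "c \<in> C" "w \<in> fst c" using cov wA by blast
      show ?thesis
      proof (cases "c = (X,b)")
        case True
        have "{u,w} \<subseteq> A \<inter> X" using wA c True uA Xb by auto
        hence "card {u,w} \<le> b" using cardX A card_mono by (metis finite_Int)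
        hence "b \<ge> 2" using wA by simp
        thus ?thesis using True c wA unfolding C'_def by auto
      next
        case False
        thus ?thesis using c wA unfolding C'_def by (cases c) auto
      qed
    qed
  qed
  have uniqB: "\<forall>w\<in>B. \<forall>c1\<in>C'. \<forall>c2\<in>C'. w\<in>fst c1 \<longrightarrow> w\<in>fst c2 \<longrightarrow> c1=c2"
  proof (intro ballI impI)
    fix w c1 c2 assume w: "w \<in> B" and c: "c1 \<in> C'" "c2 \<in> C'" "w \<in> fst c1" "w \<in> fst c2"
    show "c1 = c2"
    proof (cases "w = v")
      case True
      have "\<forall>c\<in>C'. v \<in> fst c \<longrightarrow> c = (nbhd V E X \<inter> Jq, 1)"
      proof (intro ballI impI)
        fix c assume cc: "c \<in> C'" "v \<in> fst c"
        show "c = (nbhd V E X \<inter> Jq, 1)"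
        proof (rule Ccases[OF cc(1)])
          show "c = (X \<inter> Jq, b - 1) \<Longrightarrow> c = (nbhd V E X \<inter> Jq, 1)" using cc(2) vC Xb by fastforce
          show "c = (X' \<inter> Jq, b') \<Longrightarrow> (X', b') \<in> C \<Longrightarrow> c = (nbhd V E X \<inter> Jq, 1)" for X' b'
            using cc(2) vC by fastforce
        qed simp
      qed
      thus ?thesis using c True by blast
    next
      case False
      hence wA: "w \<in> A" "w \<noteq> u" "w \<in> Jq" using w uA B by auto
      obtain c0 where c0: "c0 \<in> C" "w \<in> fst c0" using cov wA by blast
      have key: "\<forall>c\<in>C'. w \<in> fst c \<longrightarrow> c = (fst c0 \<inter> Jq, if c0 = (X,b) then b - 1 else snd c0)"
      proof (intro ballI impI)
        fix c assume cc: "c \<in> C'" "w \<in> fst c"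
        show "c = (fst c0 \<inter> Jq, if c0 = (X,b) then b - 1 else snd c0)"
        proof (rule Ccases[where P="\<lambda>c. c = (fst c0 \<inter> Jq, if c0 = (X,b) then b - 1 else snd c0)", OF cc(1)])
          assume "c = (nbhd V E X \<inter> Jq, 1)"
          hence False using noN wA cc by auto
          thus ?thesis ..
        next
          assume h: "b \<ge> 2" "c = (X \<inter> Jq, b - 1)"
          hence "c0 = (X,b)" using uniq wA c0 Xb cc by auto
          thus ?thesis using h by simp
        next
          fix X' b' assume h: "c = (X' \<inter> Jq, b')" "(X', b') \<in> C" "(X', b') \<noteq> (X, b)"
          hence "c0 = (X',b')" using uniq wA c0 cc by auto
          thus ?thesis using h by auto
        qed
      qed
      thus ?thesis using c by metis
    qed
  qed
  show ?thesis using mem satB subB covB uniqB by blast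
qed

theorem lemma3p6:
  fixes V :: "'a set" and E :: "'a \<Rightarrow> 'a \<Rightarrow> bool"
    and S Z :: "'a set" and J I' :: "nat \<Rightarrow> 'a set" and k l i :: nat
  assumes "simple_graph V E"
    and "k \<ge> 1" and "l \<ge> 1"
    and "indep_set V E S" and "card S = k"
    and "J 0 = S" and "\<forall>p\<le>l. indep_set V E (J p)"
    and "i \<le> l"
    and "Z \<subseteq> J i" and "indep_set V E Z" and "card Z = k"
    and "I' 0 = S" and "I' i = Z"
    and "\<forall>p\<le>i. indep_set V E (I' p) \<and> card (I' p) = k \<and> I' p \<subseteq> J p"
    and "\<forall>p<i. \<exists>u\<in>I' p. \<exists>v. v \<notin> I' p \<and> E u v \<and> I' (Suc p) = (I' p - {u}) \<union> {v}"
  shows "\<exists>C\<in>cfam V E S k J i. satisfies_cset Z C"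
proof -
  have finV: "finite V" using assms(1) unfolding simple_graph_def by blast
  have EV: "\<And>u v. E u v \<Longrightarrow> v \<in> V" using assms(1) unfolding simple_graph_def by blast
  have "p \<le> i \<Longrightarrow> \<exists>C\<in>cfam V E S k J p. satisfies_cset (I' p) C \<and> (\<forall>c\<in>C. fst c \<subseteq> J p)
     \<and> (\<forall>w\<in>I' p. \<exists>c\<in>C. w\<in>fst c) \<and> (\<forall>w\<in>I' p. \<forall>c1\<in>C. \<forall>c2\<in>C. w\<in>fst c1 \<longrightarrow> w\<in>fst c2 \<longrightarrow> c1=c2)" for p
  proof (induction p)
    case 0
    show ?case using assms(5,6,12) unfolding satisfies_cset_def satisfies_constraint_def by auto
  next
    case (Suc p)
    then obtain C where C: "C\<in>cfam V E S k J p" "satisfies_cset (I' p) C" "\<forall>c\<in>C. fst c \<subseteq> J p"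
     "\<forall>w\<in>I' p. \<exists>c\<in>C. w\<in>fst c" "\<forall>w\<in>I' p. \<forall>c1\<in>C. \<forall>c2\<in>C. w\<in>fst c1 \<longrightarrow> w\<in>fst c2 \<longrightarrow> c1=c2"
      by auto
    obtain u v where uv: "u \<in> I' p" "v \<notin> I' p" "E u v" "I' (Suc p) = (I' p - {u}) \<union> {v}"
      using assms(15) Suc.prems by (meson Suc_le_lessD)
    have Jp: "indep_set V E (J p)" and Jq: "indep_set V E (J (Suc p))"
      using assms(7,8) Suc.prems by auto
    have IpV: "I' p \<subseteq> V" "I' p \<subseteq> J p" using assms(14) Suc.prems unfolding indep_set_def by auto
    have Ap: "I' p \<subseteq> J p" "finite (I' p)" using IpV finV finite_subset by auto
    have Bq: "I' (Suc p) \<subseteq> J (Suc p)" using assms(14) Suc.prems by auto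
    obtain C' where "C' \<in> cstep V E (J (Suc p)) C" "satisfies_cset (I' (Suc p)) C' \<and> (\<forall>c\<in>C'. fst c \<subseteq> J (Suc p))
     \<and> (\<forall>w\<in>I' (Suc p). \<exists>c\<in>C'. w\<in>fst c) \<and> (\<forall>w\<in>I' (Suc p). \<forall>c1\<in>C'. \<forall>c2\<in>C'. w\<in>fst c1 \<longrightarrow> w\<in>fst c2 \<longrightarrow> c1=c2)"
      using step[OF Jp Jq Ap Bq uv(1,2,3,4) EV[OF uv(3)] C(2,3,4,5)] by blast
    thus ?case using C(1) by auto
  qed
  thus ?thesis using assms(13) by blast
qed

end
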